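(* For all $N\ge 2$ and all $s\ge 1$, $\alpha_{N,s}\le\beta_s$.
   Context: For $N\ge 2$ and $s\ge 1$, $$\alpha_{N,s} := \inf\left\{\frac{\sum_{1\le j<k\le N}\frac{|x_j|^s+|x_k|^s}{|x_j-x_k|}}{(N-1)\sum_{k=1}^N|x_k|^{s-1}} : x_1,\dots,x_N\in\mathbb{R}^3 \text{ pairwise distinct}\right\}$$ (convention $|x|^0=1$ when $s=1$). For a Borel probability measure $\mu$ on $\mathbb{R}^3$ let $I_s(\mu):=\iint_{\mathbb{R}^3\times\mathbb{R}^3}\frac{|x|^s+|y|^s}{2|x-y|}\,d\mu(x)\,d\mu(y)\in[0,\infty]$. Let $D_s(\mathbb{R}^3)$ be the set of Borel probability measures $\mu$ on $\mathbb{R}^3$ that belong to $H^{-1}(\mathbb{R}^3)$ (i.e. $\int_{\mathbb{R}^3}\frac{|\hat\mu(k)|^2}{1+|k|^2}dk<\infty$) and satisfy $\int|x|^{s-1}d\mu(x)<\infty$. Define $$\beta_s := \inf\left\{\frac{I_s(\mu)}{\int_{\mathbb{R}^3}|x|^{s-1}d\mu(x)} : \mu\in D_s(\mathbb{R}^3)\right\}.$$ *)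

theory Defs
  imports "HOL-Probability.Probability"
begin

definition pw :: "real \<Rightarrow> real \<Rightarrow> real" where
  "pw s r = (if s = 1 then 1 else r powr (s - 1))"

definition alpha :: "nat \<Rightarrow> real \<Rightarrow> ennreal" where
  "alpha N s = (INF x \<in> {x :: nat \<Rightarrow> real^3. inj_on x {..<N}}.
     ennreal ((\<Sum>k<N. \<Sum>j<k. (norm (x j) powr s + norm (x k) powr s) / norm (x j - x k))
              / ((real N - 1) * (\<Sum>k<N. pw s (norm (x k))))))"

text \<open>Fourier transform of a finite measure on R^3 (normalisation irrelevant for H^{-1}).\<close>
definition fourier3 :: "(real^3) measure \<Rightarrow> real^3 \<Rightarrow> complex" where
  "fourier3 M k = (CLINT x|M. cis (- (k \<bullet> x)))"

definition in_Hminus1 :: "(real^3) measure \<Rightarrow> bool" where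
  "in_Hminus1 M \<longleftrightarrow>
     (\<integral>\<^sup>+ k. ennreal ((cmod (fourier3 M k))\<^sup>2 / (1 + (norm k)\<^sup>2)) \<partial>lborel) < \<infinity>"

definition D_s :: "real \<Rightarrow> (real^3) measure set" where
  "D_s s = {M. sets M = sets borel \<and> prob_space M \<and> in_Hminus1 M \<and>
              (\<integral>\<^sup>+ x. ennreal (pw s (norm x)) \<partial>M) < \<infinity>}"

definition kern :: "real \<Rightarrow> real^3 \<Rightarrow> real^3 \<Rightarrow> ennreal" where
  "kern s x y = (if x = y then \<infinity>
                 else ennreal ((norm x powr s + norm y powr s) / (2 * norm (x - y))))"

definition I_s :: "real \<Rightarrow> (real^3) measure \<Rightarrow> ennreal" where
  "I_s s M = (\<integral>\<^sup>+ z. kern s (fst z) (snd z) \<partial>(M \<Otimes>\<^sub>M M))"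

definition beta :: "real \<Rightarrow> ennreal" where
  "beta s = (INF M \<in> D_s s. I_s s M / (\<integral>\<^sup>+ x. ennreal (pw s (norm x)) \<partial>M))"

end

theory Submission
  imports Defs
begin

lemma kern_meas: "(\<lambda>z. kern s (fst z) (snd z)) \<in> borel_measurable (borel \<Otimes>\<^sub>M borel :: ((real^3) \<times> (real^3)) measure)"
  unfolding kern_def by measurable

lemma pair_distr:
  assumes M: "prob_space M" and I: "finite I" "j \<in> I" "k \<in> I" "j \<noteq> k"
  shows "distr (PiM I (\<lambda>_. M)) (M \<Otimes>\<^sub>M M) (\<lambda>x. (x j, x k)) = M \<Otimes>\<^sub>M M"
proof (rule pair_measure_eqI[symmetric])
  show "sigma_finite_measure M" using M by (simp add: prob_space_imp_sigma_finite)
  then show "sigma_finite_measure M" .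
  show "sets (M \<Otimes>\<^sub>M M) = sets (distr (PiM I (\<lambda>_. M)) (M \<Otimes>\<^sub>M M) (\<lambda>x. (x j, x k)))" by simp
  fix A B assume A: "A \<in> sets M" and B: "B \<in> sets M"
  have meas: "(\<lambda>x. (x j, x k)) \<in> measurable (PiM I (\<lambda>_. M)) (M \<Otimes>\<^sub>M M)"
    using I by (intro measurable_Pair measurable_component_singleton) auto
  have eq: "(\<lambda>x. (x j, x k)) -` (A \<times> B) \<inter> space (PiM I (\<lambda>_. M))
     = prod_emb I (\<lambda>_. M) {j,k} (Pi\<^sub>E {j,k} (\<lambda>i. if i = j then A else B))"
    using I by (auto simp: prod_emb_def space_PiM PiE_iff)
  have "emeasure (distr (PiM I (\<lambda>_. M)) (M \<Otimes>\<^sub>M M) (\<lambda>x. (x j, x k))) (A \<times> B)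
     = emeasure (PiM I (\<lambda>_. M)) (prod_emb I (\<lambda>_. M) {j,k} (Pi\<^sub>E {j,k} (\<lambda>i. if i = j then A else B)))"
    using A B meas by (subst emeasure_distr) (auto simp: eq)
  also have "\<dots> = (\<Prod>i\<in>{j,k}. emeasure M (if i = j then A else B))"
    using I A B M by (subst emeasure_PiM_emb) auto
  also have "\<dots> = emeasure M A * emeasure M B" using I by simp
  finally show "emeasure M A * emeasure M B = emeasure (distr (PiM I (\<lambda>_. M)) (M \<Otimes>\<^sub>M M) (\<lambda>x. (x j, x k))) (A \<times> B)" by simp
qed

lemma pair_integral:
  assumes M: "prob_space M" and I: "finite I" "j \<in> I" "k \<in> I" "j \<noteq> k"
    and f: "f \<in> borel_measurable (M \<Otimes>\<^sub>M M)"
  shows "(\<integral>\<^sup>+ x. f (x j, x k) \<partial>PiM I (\<lambda>_. M)) = (\<integral>\<^sup>+ z. f z \<partial>(M \<Otimes>\<^sub>M M))"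
proof -
  have meas: "(\<lambda>x. (x j, x k)) \<in> measurable (PiM I (\<lambda>_. M)) (M \<Otimes>\<^sub>M M)"
    using I by (intro measurable_Pair measurable_component_singleton) auto
  have f': "f \<in> borel_measurable (distr (PiM I (\<lambda>_. M)) (M \<Otimes>\<^sub>M M) (\<lambda>x. (x j, x k)))"
    using f by (simp add: pair_distr[OF assms(1-5)])
  show ?thesis
    using nn_integral_distr[OF meas f'] pair_distr[OF assms(1-5)] by simp
qed

lemma single_integral:
  assumes M: "prob_space M" and I: "k \<in> I"
    and f: "f \<in> borel_measurable M"
  shows "(\<integral>\<^sup>+ x. f (x k) \<partial>PiM I (\<lambda>_. M)) = (\<integral>\<^sup>+ z. f z \<partial>M)"
proof -
  have meas: "(\<lambda>x. x k) \<in> measurable (PiM I (\<lambda>_. M)) M"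
    using I by (intro measurable_component_singleton) auto
  have d: "distr (PiM I (\<lambda>_. M)) M (\<lambda>x. x k) = M"
    using distr_PiM_component[of I "\<lambda>_. M" k] M I by simp
  have f': "f \<in> borel_measurable (distr (PiM I (\<lambda>_. M)) M (\<lambda>x. x k))"
    using f by (simp add: d)
  show ?thesis
    using nn_integral_distr[OF meas f'] d by simp
qed

lemma two_sum: "2 * (\<Sum>k<N. k) = N * (N - 1::nat)"
  by (induct N) (auto simp: algebra_simps)

lemma kern_pos: "kern s x y \<noteq> 0"
proof (cases "x = y")
  case False
  then have "norm (x - y) > 0" by simp
  moreover have "norm x powr s + norm y powr s > 0"
  proof -
    have "x \<noteq> 0 \<or> y \<noteq> 0" using False by auto
    then show ?thesis by (auto intro: add_pos_nonneg add_nonneg_pos)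
  qed
  ultimately show ?thesis using False by (simp add: kern_def)
qed (simp add: kern_def)

lemma pointwise:
  assumes N: "N \<ge> 2" and s: "s \<ge> 1"
  shows "alpha N s * (ennreal (real N - 1) * (\<Sum>k<N. ennreal (pw s (norm (x k)))))
     \<le> (\<Sum>k<N. \<Sum>j<k. 2 * kern s (x j) (x k))"
proof (cases "inj_on x {..<N}")
  case True
  define num where "num = (\<Sum>k<N. \<Sum>j<k. (norm (x j) powr s + norm (x k) powr s) / norm (x j - x k))"
  define den where "den = (real N - 1) * (\<Sum>k<N. pw s (norm (x k)))"
  have pw0: "pw s r \<ge> 0" for r by (simp add: pw_def)
  have den_pos: "den > 0"
  proof -
    have "\<exists>k<N. pw s (norm (x k)) > 0"
    proof (cases "s = 1")
      case True then show ?thesis using N by (auto simp: pw_def intro!: exI[of _ 0])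
    next
      case False
      have "x 0 \<noteq> x 1" using True N unfolding inj_on_def by (metis One_nat_def lessThan_iff less_2_cases_iff less_le_trans zero_neq_one)
      then have "x 0 \<noteq> 0 \<or> x 1 \<noteq> 0" by auto
      then show ?thesis using N False by (auto simp: pw_def intro: exI[of _ 0] exI[of _ 1])
    qed
    then obtain k where "k < N" "pw s (norm (x k)) > 0" by auto
    then have "(\<Sum>k<N. pw s (norm (x k))) > 0"
      by (intro sum_pos2[where i=k]) (auto intro: pw0)
    moreover have "real N - 1 > 0" using N by simp
    ultimately show ?thesis unfolding den_def by simp
  qed
  have num0: "num \<ge> 0" unfolding num_def by (intro sum_nonneg) auto
  have "alpha N s \<le> ennreal (num / den)"
    unfolding alpha_def num_def den_def using True by (intro INF_lower) auto
  then have "alpha N s * ennreal den \<le> ennreal (num / den) * ennreal den"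
    by (rule mult_right_mono) simp
  also have "\<dots> = ennreal num" using den_pos num0
    by (simp add: ennreal_mult[symmetric])
  also have "ennreal num = (\<Sum>k<N. \<Sum>j<k. 2 * kern s (x j) (x k))"
  proof -
    have "ennreal num = (\<Sum>k<N. ennreal (\<Sum>j<k. (norm (x j) powr s + norm (x k) powr s) / norm (x j - x k)))"
      unfolding num_def by (subst sum_ennreal[symmetric]) (auto intro!: sum_nonneg)
    also have "\<dots> = (\<Sum>k<N. \<Sum>j<k. ennreal ((norm (x j) powr s + norm (x k) powr s) / norm (x j - x k)))"
      by (intro sum.cong refl, subst sum_ennreal[symmetric]) auto
    also have "\<dots> = (\<Sum>k<N. \<Sum>j<k. 2 * kern s (x j) (x k))"
    proof (intro sum.cong refl)
      fix k j assume k: "k \<in> {..<N}" and j: "j \<in> {..<k}"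
      then have "x j \<noteq> x k" using True by (auto simp: inj_on_def)
      define t where "t = (norm (x j) powr s + norm (x k) powr s) / (2 * norm (x j - x k))"
      have t0: "t \<ge> 0" unfolding t_def by simp
      have "2 * ennreal t = ennreal (2 * t)" using t0 by (simp add: ennreal_mult)
      moreover have "2 * t = (norm (x j) powr s + norm (x k) powr s) / norm (x j - x k)"
        unfolding t_def by (cases "norm (x j - x k) = 0") (simp_all add: field_simps)
      ultimately show "ennreal ((norm (x j) powr s + norm (x k) powr s) / norm (x j - x k)) = 2 * kern s (x j) (x k)"
        using \<open>x j \<noteq> x k\<close> by (simp add: kern_def t_def)
    qed
    finally show ?thesis .
  qed
  finally have fin: "alpha N s * ennreal den \<le> (\<Sum>k<N. \<Sum>j<k. 2 * kern s (x j) (x k))" .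
  have "ennreal den = ennreal (real N - 1) * ennreal (\<Sum>k<N. pw s (norm (x k)))"
    unfolding den_def using N by (intro ennreal_mult) (auto intro: sum_nonneg pw0)
  also have "\<dots> = ennreal (real N - 1) * (\<Sum>k<N. ennreal (pw s (norm (x k))))"
    by (simp add: sum_ennreal pw0)
  finally show ?thesis using fin by simp
next
  case False
  then obtain a b where ab: "a < N" "b < N" "a \<noteq> b" "x a = x b" by (auto simp: inj_on_def)
  then obtain j k where jk: "j < k" "k < N" "x j = x k"
    by (metis linorder_neqE_nat)
  have "(top::ennreal) = 2 * kern s (x j) (x k)" using jk by (simp add: kern_def)
  also have "\<dots> \<le> (\<Sum>j<k. 2 * kern s (x j) (x k))"
    using jk by (intro member_le_sum) auto
  also have "\<dots> \<le> (\<Sum>k<N. \<Sum>j<k. 2 * kern s (x j) (x k))"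
    using jk by (intro member_le_sum[where f="\<lambda>k. \<Sum>j<k. 2 * kern s (x j) (x k)"]) auto
  finally have T: "top \<le> (\<Sum>k<N. \<Sum>j<k. 2 * kern s (x j) (x k))" .
  show ?thesis by (rule order_trans[OF top_greatest T])
qed

lemma main_bound:
  assumes N: "N \<ge> 2" and s: "s \<ge> 1" and MD: "M \<in> D_s s"
  shows "alpha N s \<le> I_s s M / (\<integral>\<^sup>+ x. ennreal (pw s (norm x)) \<partial>M)"
proof -
  have Mb[measurable_cong]: "sets M = sets borel" and Mp: "prob_space M"
    and Pfin: "(\<integral>\<^sup>+ x. ennreal (pw s (norm x)) \<partial>M) < \<infinity>"
    using MD by (auto simp: D_s_def)
  define P where "P = (\<integral>\<^sup>+ x. ennreal (pw s (norm x)) \<partial>M)"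
  define I where "I = I_s s M"
  define Q where "Q = PiM {..<N} (\<lambda>_. M)"
  define c where "c = ennreal (real N - 1)"
  have pwM: "(\<lambda>x. ennreal (pw s (norm x))) \<in> borel_measurable M"
    unfolding pw_def by measurable
  have kernM: "(\<lambda>z. kern s (fst z) (snd z)) \<in> borel_measurable (M \<Otimes>\<^sub>M M)"
    using kern_meas[of s] by (simp add: measurable_cong_sets[OF sets_pair_measure_cong[OF Mb Mb] refl])
  have compM: "(\<lambda>x. x k) \<in> measurable Q M" if "k < N" for k
    unfolding Q_def using that by (intro measurable_component_singleton) auto
  have pwQ: "(\<lambda>x. ennreal (pw s (norm (x k)))) \<in> borel_measurable Q" if "k < N" for k
    using measurable_compose[OF compM[OF that] pwM] .
  have pairM: "(\<lambda>x. (x j, x k)) \<in> measurable Q (M \<Otimes>\<^sub>M M)" if "j < N" "k < N" for j k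
    unfolding Q_def using that by (intro measurable_Pair measurable_component_singleton) auto
  have kernQ: "(\<lambda>x. kern s (x j) (x k)) \<in> borel_measurable Q" if "j < N" "k < N" for j k
    using measurable_compose[OF pairM[OF that] kernM] by simp
  have "(\<integral>\<^sup>+ x. alpha N s * (c * (\<Sum>k<N. ennreal (pw s (norm (x k))))) \<partial>Q)
      \<le> (\<integral>\<^sup>+ x. (\<Sum>k<N. \<Sum>j<k. 2 * kern s (x j) (x k)) \<partial>Q)"
    unfolding c_def by (intro nn_integral_mono pointwise N s)
  also have "(\<integral>\<^sup>+ x. (\<Sum>k<N. \<Sum>j<k. 2 * kern s (x j) (x k)) \<partial>Q)
      = (\<Sum>k<N. \<Sum>j<k. 2 * I)"
  proof -
    have "(\<integral>\<^sup>+ x. (\<Sum>k<N. \<Sum>j<k. 2 * kern s (x j) (x k)) \<partial>Q)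
       = (\<Sum>k<N. \<integral>\<^sup>+ x. (\<Sum>j<k. 2 * kern s (x j) (x k)) \<partial>Q)"
      using kernQ by (intro nn_integral_sum) auto
    also have "\<dots> = (\<Sum>k<N. \<Sum>j<k. \<integral>\<^sup>+ x. 2 * kern s (x j) (x k) \<partial>Q)"
      using kernQ by (intro sum.cong refl nn_integral_sum) auto
    also have "\<dots> = (\<Sum>k<N. \<Sum>j<k. 2 * I)"
    proof (intro sum.cong refl)
      fix k j assume k: "k \<in> {..<N}" and j: "j \<in> {..<k}"
      have "(\<integral>\<^sup>+ x. 2 * kern s (x j) (x k) \<partial>Q) = 2 * (\<integral>\<^sup>+ x. kern s (x j) (x k) \<partial>Q)"
        using kernQ k j by (intro nn_integral_cmult) auto
      also have "(\<integral>\<^sup>+ x. kern s (x j) (x k) \<partial>Q) = I"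
        using pair_integral[OF Mp, of "{..<N}" j k "\<lambda>z. kern s (fst z) (snd z)"] k j kernM
        unfolding Q_def I_def I_s_def by simp
      finally show "(\<integral>\<^sup>+ x. 2 * kern s (x j) (x k) \<partial>Q) = 2 * I" .
    qed
    finally show ?thesis .
  qed
  also have "(\<Sum>k<N. \<Sum>j<k. 2 * I) = of_nat (N * (N - 1)) * I"
  proof -
    have "(\<Sum>k<N. \<Sum>j<k. 2 * I) = (\<Sum>k<N. of_nat k * (2 * I))" by simp
    also have "\<dots> = of_nat (\<Sum>k<N. k) * (2 * I)" by (simp add: sum_distrib_right)
    also have "\<dots> = of_nat (2 * (\<Sum>k<N. k)) * I" by (simp add: mult_ac)
    finally show ?thesis by (simp only: two_sum)
  qed
  also have "(\<integral>\<^sup>+ x. alpha N s * (c * (\<Sum>k<N. ennreal (pw s (norm (x k))))) \<partial>Q)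
      = alpha N s * (c * (\<Sum>k<N. \<integral>\<^sup>+ x. ennreal (pw s (norm (x k))) \<partial>Q))"
  proof -
    have "(\<integral>\<^sup>+ x. (\<Sum>k<N. ennreal (pw s (norm (x k)))) \<partial>Q) = (\<Sum>k<N. \<integral>\<^sup>+ x. ennreal (pw s (norm (x k))) \<partial>Q)"
      using pwQ by (intro nn_integral_sum) auto
    then show ?thesis
      using pwQ by (simp add: nn_integral_cmult borel_measurable_sum)
  qed
  also have "(\<Sum>k<N. \<integral>\<^sup>+ x. ennreal (pw s (norm (x k))) \<partial>Q) = of_nat N * P"
  proof -
    have "(\<Sum>k<N. \<integral>\<^sup>+ x. ennreal (pw s (norm (x k))) \<partial>Q) = (\<Sum>k<N. P)"
      unfolding Q_def P_def
      by (intro sum.cong refl single_integral[OF Mp _ pwM]) auto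
    then show ?thesis by simp
  qed
  finally have ineq: "alpha N s * (c * (of_nat N * P)) \<le> of_nat (N * (N - 1)) * I" .
  have "c * of_nat N = of_nat (N * (N - 1))"
    unfolding c_def using N
    by (simp add: ennreal_of_nat_eq_real_of_nat of_nat_diff ennreal_mult[symmetric] mult_ac)
  then have "alpha N s * (c * (of_nat N * P)) = of_nat (N * (N - 1)) * (alpha N s * P)"
    by (metis mult.assoc mult.commute)
  with ineq have "of_nat (N * (N - 1)) * (alpha N s * P) \<le> of_nat (N * (N - 1)) * I" by simp
  moreover have "(of_nat (N * (N - 1)) :: ennreal) \<noteq> 0" using N by simp
  moreover have "(of_nat (N * (N - 1)) :: ennreal) \<noteq> top" by (simp only: ennreal_of_nat_eq_real_of_nat ennreal_neq_top not_False_eq_True)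
  ultimately have aPI: "alpha N s * P \<le> I" using ennreal_mult_le_mult_iff by blast
  have Ipos: "I \<noteq> 0"
  proof
    assume "I = 0"
    then have "AE z in M \<Otimes>\<^sub>M M. kern s (fst z) (snd z) = 0"
      unfolding I_def I_s_def using nn_integral_0_iff_AE[OF kernM] by simp
    then have "AE z in M \<Otimes>\<^sub>M M. False" by (simp add: kern_pos)
    then show False using prob_space.AE_False[OF prob_space_pair[OF Mp Mp]] by simp
  qed
  show ?thesis
  proof (cases "P = 0")
    case True
    then have "I / P = top" using Ipos by (simp add: divide_ennreal_def ennreal_mult_top)
    then show ?thesis unfolding I_def P_def by simp
  next
    case False
    have "alpha N s = alpha N s * P / P" using False Pfin unfolding P_def
      by (simp add: ennreal_mult_divide_eq)
    also have "\<dots> \<le> I / P" using aPI by (rule divide_right_mono_ennreal)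
    finally show ?thesis unfolding I_def P_def .
  qed
qed

theorem lemma3p2:
  fixes N :: nat and s :: real
  assumes "N \<ge> 2" and "s \<ge> 1"
  shows "alpha N s \<le> beta s"
  unfolding beta_def using main_bound[OF assms] by (intro INF_greatest) auto

end
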